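(* Let $A\to M$ be a vector bundle of rank at least $n$. Let $\widehat{\xi}^1,\dots,\widehat{\xi}^n\in\Gamma(A^* )$ be linearly independent over $C^\infty(M)$ and let $\widehat{X}_1,\dots,\widehat{X}_n\in\Gamma(\mathrm{CDO}(A))$ be covariant differential operators with symbols $\widehat{x}_1,\dots,\widehat{x}_n\in\Gamma(TM)$. Define the anchor $a_A:A\to TM$, the operator $\nabla^A:\Gamma(A)\times\Gamma(A)\to\Gamma(A)$ and the bracket $[\cdot,\cdot]_A$ on $\Gamma(A)$ by $$a_A(y)=\sum_{i=1}^n\langle y,\widehat{\xi}^i\rangle\,\widehat{x}_i,\qquad \nabla^A_y z=\sum_{i=1}^n\langle y,\widehat{\xi}^i\rangle\,\widehat{X}_i(z),\qquad [y,z]_A=\nabla^A_yz-\nabla^A_zy,$$ for $y,z\in\Gamma(A)$. Suppose there are functions $a_{ik}^j\in C^\infty(M)$ ($1\le i,j,k\le n$) such that for all $i,j$ $$\widehat{X}_i(\widehat{\xi}^j)=\sum_{k=1}^n a_{ik}^j\,\widehat{\xi}^k,\qquad [\widehat{X}_i,\widehat{X}_j]=\sum_{k=1}^n\big(a_{ji}^k-a_{ij}^k\big)\widehat{X}_k .$$ Then $R^{\nabla^A}(x,y)z=0$ for all $x,y,z\in\Gamma(A)$, and $(A,[\cdot,\cdot]_A,a_A)$ is a Lie algebroid.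
   Context: A covariant differential operator on $A$ is an $\mathbb{R}$-linear map $\widehat{X}:\Gamma(A)\to\Gamma(A)$ together with a vector field $\widehat{x}$ (its symbol) such that $\widehat{X}(fy)=f\widehat{X}(y)+\widehat{x}(f)\,y$ for all $f\in C^\infty(M)$, $y\in\Gamma(A)$. Such an operator acts on $\Gamma(A^* )$ by the dual action $\langle \widehat{X}(\xi),y\rangle=\widehat{x}\langle\xi,y\rangle-\langle\xi,\widehat{X}(y)\rangle$. The commutator $[\widehat{X},\widehat{Y}]=\widehat{X}\circ\widehat{Y}-\widehat{Y}\circ\widehat{X}$ of covariant differential operators is a covariant differential operator. For the operator $\nabla=\nabla^A$ the curvature is $R^{\nabla}(x,y)z=\nabla_x\nabla_yz-\nabla_y\nabla_xz-\nabla_{[x,y]_A}z$. A Lie algebroid $(A,[\cdot,\cdot]_A,a_A)$ is a vector bundle with a bundle map $a_A:A\to TM$ and an $\mathbb{R}$-bilinear skew-symmetric bracket on $\Gamma(A)$ satisfying $[x,fy]_A=f[x,y]_A+a_A(x)(f)\,y$ and the Jacobi identity. *)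

theory Defs
  imports Complex_Main
begin

text \<open>Smooth functions C^\<infinity>(M) are a set C of real-valued
functions on the points of M (a unital subalgebra); sections of A are the
elements of a type 's (an additive group) with a C-module action sm;
vector fields are derivations of C; sections of the dual bundle are the
C-linear maps from sections of A to C.\<close>

definition smooth_algebra :: "('m \<Rightarrow> real) set \<Rightarrow> bool" where
  "smooth_algebra C \<longleftrightarrow>
     (\<forall>c. (\<lambda>_. c) \<in> C) \<and>
     (\<forall>f\<in>C. \<forall>g\<in>C. (\<lambda>m. f m + g m) \<in> C \<and> (\<lambda>m. f m * g m) \<in> C) \<and>
     (\<forall>f\<in>C. (\<lambda>m. - f m) \<in> C)"

definition section_module ::
  "('m \<Rightarrow> real) set \<Rightarrow> (('m \<Rightarrow> real) \<Rightarrow> 's::ab_group_add \<Rightarrow> 's) \<Rightarrow> bool" where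
  "section_module C sm \<longleftrightarrow>
     (\<forall>f\<in>C. \<forall>y z. sm f (y + z) = sm f y + sm f z) \<and>
     (\<forall>f\<in>C. \<forall>g\<in>C. \<forall>y. sm (\<lambda>m. f m + g m) y = sm f y + sm g y) \<and>
     (\<forall>f\<in>C. \<forall>g\<in>C. \<forall>y. sm (\<lambda>m. f m * g m) y = sm f (sm g y)) \<and>
     (\<forall>y. sm (\<lambda>_. 1) y = y)"

definition vector_field ::
  "('m \<Rightarrow> real) set \<Rightarrow> (('m \<Rightarrow> real) \<Rightarrow> ('m \<Rightarrow> real)) \<Rightarrow> bool" where
  "vector_field C v \<longleftrightarrow>
     (\<forall>f\<in>C. v f \<in> C) \<and>
     (\<forall>f\<in>C. \<forall>g\<in>C. v (\<lambda>m. f m + g m) = (\<lambda>m. v f m + v g m)) \<and>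
     (\<forall>c. \<forall>f\<in>C. v (\<lambda>m. c * f m) = (\<lambda>m. c * v f m)) \<and>
     (\<forall>f\<in>C. \<forall>g\<in>C. v (\<lambda>m. f m * g m) = (\<lambda>m. f m * v g m + g m * v f m))"

definition dual_section ::
  "('m \<Rightarrow> real) set \<Rightarrow> (('m \<Rightarrow> real) \<Rightarrow> 's::ab_group_add \<Rightarrow> 's) \<Rightarrow> ('s \<Rightarrow> 'm \<Rightarrow> real) \<Rightarrow> bool" where
  "dual_section C sm \<xi> \<longleftrightarrow>
     (\<forall>y. \<xi> y \<in> C) \<and>
     (\<forall>y z. \<xi> (y + z) = (\<lambda>m. \<xi> y m + \<xi> z m)) \<and>
     (\<forall>f\<in>C. \<forall>y. \<xi> (sm f y) = (\<lambda>m. f m * \<xi> y m))"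

definition cdo ::
  "('m \<Rightarrow> real) set \<Rightarrow> (('m \<Rightarrow> real) \<Rightarrow> 's::ab_group_add \<Rightarrow> 's) \<Rightarrow> ('s \<Rightarrow> 's)
     \<Rightarrow> (('m \<Rightarrow> real) \<Rightarrow> ('m \<Rightarrow> real)) \<Rightarrow> bool" where
  "cdo C sm X x \<longleftrightarrow>
     vector_field C x \<and>
     (\<forall>y z. X (y + z) = X y + X z) \<and>
     (\<forall>c. \<forall>y. X (sm (\<lambda>_. c) y) = sm (\<lambda>_. c) (X y)) \<and>
     (\<forall>f\<in>C. \<forall>y. X (sm f y) = sm f (X y) + sm (x f) y)"

definition cdo_dual ::
  "(('m \<Rightarrow> real) \<Rightarrow> ('m \<Rightarrow> real)) \<Rightarrow> ('s \<Rightarrow> 's) \<Rightarrow> ('s \<Rightarrow> 'm \<Rightarrow> real) \<Rightarrow> ('s \<Rightarrow> 'm \<Rightarrow> real)" where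
  "cdo_dual x X \<xi> = (\<lambda>y m. x (\<xi> y) m - \<xi> (X y) m)"

definition lin_indep_dual ::
  "('m \<Rightarrow> real) set \<Rightarrow> nat \<Rightarrow> (nat \<Rightarrow> 's \<Rightarrow> 'm \<Rightarrow> real) \<Rightarrow> bool" where
  "lin_indep_dual C n \<xi> \<longleftrightarrow>
     (\<forall>f. (\<forall>i\<in>{1..n}. f i \<in> C) \<and> (\<forall>y. (\<lambda>m. \<Sum>i=1..n. f i m * \<xi> i y m) = (\<lambda>_. 0))
          \<longrightarrow> (\<forall>i\<in>{1..n}. f i = (\<lambda>_. 0)))"

definition anchorA ::
  "nat \<Rightarrow> (nat \<Rightarrow> 's \<Rightarrow> 'm \<Rightarrow> real) \<Rightarrow> (nat \<Rightarrow> ('m \<Rightarrow> real) \<Rightarrow> ('m \<Rightarrow> real))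
     \<Rightarrow> 's \<Rightarrow> ('m \<Rightarrow> real) \<Rightarrow> ('m \<Rightarrow> real)" where
  "anchorA n \<xi> xs y f = (\<lambda>m. \<Sum>i=1..n. \<xi> i y m * xs i f m)"

definition nablaA ::
  "(('m \<Rightarrow> real) \<Rightarrow> 's::ab_group_add \<Rightarrow> 's) \<Rightarrow> nat \<Rightarrow> (nat \<Rightarrow> 's \<Rightarrow> 'm \<Rightarrow> real)
     \<Rightarrow> (nat \<Rightarrow> 's \<Rightarrow> 's) \<Rightarrow> 's \<Rightarrow> 's \<Rightarrow> 's" where
  "nablaA sm n \<xi> X y z = (\<Sum>i=1..n. sm (\<xi> i y) (X i z))"

definition bracketA ::
  "(('m \<Rightarrow> real) \<Rightarrow> 's::ab_group_add \<Rightarrow> 's) \<Rightarrow> nat \<Rightarrow> (nat \<Rightarrow> 's \<Rightarrow> 'm \<Rightarrow> real)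
     \<Rightarrow> (nat \<Rightarrow> 's \<Rightarrow> 's) \<Rightarrow> 's \<Rightarrow> 's \<Rightarrow> 's" where
  "bracketA sm n \<xi> X y z = nablaA sm n \<xi> X y z - nablaA sm n \<xi> X z y"

definition curvature ::
  "('s \<Rightarrow> 's \<Rightarrow> 's::ab_group_add) \<Rightarrow> ('s \<Rightarrow> 's \<Rightarrow> 's) \<Rightarrow> 's \<Rightarrow> 's \<Rightarrow> 's \<Rightarrow> 's" where
  "curvature nabla br x y z = nabla x (nabla y z) - nabla y (nabla x z) - nabla (br x y) z"

definition lie_algebroid ::
  "('m \<Rightarrow> real) set \<Rightarrow> (('m \<Rightarrow> real) \<Rightarrow> 's::ab_group_add \<Rightarrow> 's) \<Rightarrow> ('s \<Rightarrow> 's \<Rightarrow> 's)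
     \<Rightarrow> ('s \<Rightarrow> ('m \<Rightarrow> real) \<Rightarrow> ('m \<Rightarrow> real)) \<Rightarrow> bool" where
  "lie_algebroid C sm br anc \<longleftrightarrow>
     (\<forall>y. vector_field C (anc y)) \<and>
     (\<forall>y z. \<forall>f\<in>C. anc (y + z) f = (\<lambda>m. anc y f m + anc z f m)) \<and>
     (\<forall>g\<in>C. \<forall>y. \<forall>f\<in>C. anc (sm g y) f = (\<lambda>m. g m * anc y f m)) \<and>
     (\<forall>x y z. br x (y + z) = br x y + br x z) \<and>
     (\<forall>x y z. br (x + y) z = br x z + br y z) \<and>
     (\<forall>c x y. br x (sm (\<lambda>_. c) y) = sm (\<lambda>_. c) (br x y)) \<and>
     (\<forall>c x y. br (sm (\<lambda>_. c) x) y = sm (\<lambda>_. c) (br x y)) \<and>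
     (\<forall>x y. br x y = - br y x) \<and>
     (\<forall>x y. \<forall>f\<in>C. br x (sm f y) = sm f (br x y) + sm (anc x f) y) \<and>
     (\<forall>x y z. br x (br y z) + br y (br z x) + br z (br x y) = 0)"

end

theory Submission
  imports Defs
begin



locale setting =
  fixes C :: "('m \<Rightarrow> real) set"
    and sm :: "('m \<Rightarrow> real) \<Rightarrow> 's::ab_group_add \<Rightarrow> 's"
    and n :: nat
    and \<xi> :: "nat \<Rightarrow> 's \<Rightarrow> 'm \<Rightarrow> real"
    and X :: "nat \<Rightarrow> 's \<Rightarrow> 's"
    and xs :: "nat \<Rightarrow> ('m \<Rightarrow> real) \<Rightarrow> ('m \<Rightarrow> real)"
    and a :: "nat \<Rightarrow> nat \<Rightarrow> nat \<Rightarrow> 'm \<Rightarrow> real"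
  assumes alg: "smooth_algebra C"
    and modl: "section_module C sm"
    and dual: "\<forall>i\<in>{1..n}. dual_section C sm (\<xi> i)"
    and cdos: "\<forall>i\<in>{1..n}. cdo C sm (X i) (xs i)"
    and a_smooth: "\<forall>i\<in>{1..n}. \<forall>j\<in>{1..n}. \<forall>k\<in>{1..n}. a i k j \<in> C"
    and hdual: "\<forall>i\<in>{1..n}. \<forall>j\<in>{1..n}.
        cdo_dual (xs i) (X i) (\<xi> j) = (\<lambda>y m. \<Sum>k=1..n. a i k j m * \<xi> k y m)"
    and hcomm: "\<forall>i\<in>{1..n}. \<forall>j\<in>{1..n}. \<forall>z.
        X i (X j z) - X j (X i z) = (\<Sum>k=1..n. sm (\<lambda>m. a j i k m - a i j k m) (X k z))"
begin

lemma C_const: "(\<lambda>_. c) \<in> C" using alg unfolding smooth_algebra_def by blast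
lemma C_add: "f \<in> C \<Longrightarrow> g \<in> C \<Longrightarrow> (\<lambda>m. f m + g m) \<in> C"
  using alg unfolding smooth_algebra_def by blast
lemma C_mult: "f \<in> C \<Longrightarrow> g \<in> C \<Longrightarrow> (\<lambda>m. f m * g m) \<in> C"
  using alg unfolding smooth_algebra_def by blast
lemma C_neg: "f \<in> C \<Longrightarrow> (\<lambda>m. - f m) \<in> C"
  using alg unfolding smooth_algebra_def by blast
lemma C_diff: "f \<in> C \<Longrightarrow> g \<in> C \<Longrightarrow> (\<lambda>m. f m - g m) \<in> C"
  using C_add[OF _ C_neg, of f g] by simp
lemma C_sum: "(\<And>i. i \<in> I \<Longrightarrow> f i \<in> C) \<Longrightarrow> (\<lambda>m. \<Sum>i\<in>I. f i m) \<in> C"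
proof (induction I rule: infinite_finite_induct)
  case (infinite A) then show ?case using C_const by simp
next
  case empty then show ?case using C_const by simp
next
  case (insert x F) then show ?case using C_add[of "f x" "\<lambda>m. \<Sum>i\<in>F. f i m"] by simp
qed

lemma xi_C: "i \<in> {1..n} \<Longrightarrow> \<xi> i y \<in> C"
  using dual unfolding dual_section_def by blast
lemma xs_C: "i \<in> {1..n} \<Longrightarrow> f \<in> C \<Longrightarrow> xs i f \<in> C"
  using cdos unfolding cdo_def vector_field_def by blast
lemma a_C: "i \<in> {1..n} \<Longrightarrow> j \<in> {1..n} \<Longrightarrow> k \<in> {1..n} \<Longrightarrow> a i j k \<in> C"
  using a_smooth by blast

lemmas Cintro = C_const C_add C_mult C_neg C_diff C_sum xi_C xs_C a_C

lemma sm_add_right: "f \<in> C \<Longrightarrow> sm f (y + z) = sm f y + sm f z"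
  using modl unfolding section_module_def by blast
lemma sm_add_left: "f \<in> C \<Longrightarrow> g \<in> C \<Longrightarrow> sm (\<lambda>m. f m + g m) y = sm f y + sm g y"
  using modl unfolding section_module_def by blast
lemma sm_mult: "f \<in> C \<Longrightarrow> g \<in> C \<Longrightarrow> sm (\<lambda>m. f m * g m) y = sm f (sm g y)"
  using modl unfolding section_module_def by blast
lemma sm_one: "sm (\<lambda>_. 1) y = y"
  using modl unfolding section_module_def by blast
lemma sm_zero_right: "f \<in> C \<Longrightarrow> sm f 0 = 0"
  using sm_add_right[of f 0 0] by simp
lemma sm_minus_right: "f \<in> C \<Longrightarrow> sm f (- y) = - sm f y"
  using sm_add_right[of f y "- y"] sm_zero_right[of f] by (simp add: eq_neg_iff_add_eq_0 add.commute)
lemma sm_diff_right: "f \<in> C \<Longrightarrow> sm f (y - z) = sm f y - sm f z"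
  using sm_add_right[of f y "- z"] sm_minus_right[of f z] by simp
lemma sm_sum_right: "f \<in> C \<Longrightarrow> sm f (\<Sum>i\<in>I. v i) = (\<Sum>i\<in>I. sm f (v i))"
  by (induction I rule: infinite_finite_induct) (simp_all add: sm_zero_right sm_add_right)
lemma sm_zero_left: "sm (\<lambda>_. 0) y = 0"
  using sm_add_left[of "\<lambda>_. 0" "\<lambda>_. 0" y] C_const by simp
lemma sm_zero_left': "f = (\<lambda>_. 0) \<Longrightarrow> sm f y = 0"
  using sm_zero_left by simp
lemma sm_minus_left: "f \<in> C \<Longrightarrow> sm (\<lambda>m. - f m) y = - sm f y"
  using sm_add_left[of f "\<lambda>m. - f m" y] C_neg[of f] sm_zero_left
  by (simp add: eq_neg_iff_add_eq_0 add.commute)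
lemma sm_diff_left: "f \<in> C \<Longrightarrow> g \<in> C \<Longrightarrow> sm (\<lambda>m. f m - g m) y = sm f y - sm g y"
  using sm_add_left[of f "\<lambda>m. - g m" y] C_neg[of g] sm_minus_left[of g y] by simp
lemma sm_sum_left: "(\<And>i. i \<in> I \<Longrightarrow> f i \<in> C) \<Longrightarrow> sm (\<lambda>m. \<Sum>i\<in>I. f i m) y = (\<Sum>i\<in>I. sm (f i) y)"
proof (induction I rule: infinite_finite_induct)
  case (infinite A) then show ?case using sm_zero_left by simp
next
  case empty then show ?case using sm_zero_left by simp
next
  case (insert x F)
  have "sm (\<lambda>m. \<Sum>i\<in>insert x F. f i m) y = sm (\<lambda>m. f x m + (\<Sum>i\<in>F. f i m)) y"
    using insert by simp
  also have "\<dots> = sm (f x) y + sm (\<lambda>m. \<Sum>i\<in>F. f i m) y"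
    by (rule sm_add_left) (use insert C_sum[of F f] in auto)
  finally show ?case using insert by simp
qed

lemma X_add: "i \<in> {1..n} \<Longrightarrow> X i (y + z) = X i y + X i z"
  using cdos unfolding cdo_def by blast
lemma X_const: "i \<in> {1..n} \<Longrightarrow> X i (sm (\<lambda>_. c) y) = sm (\<lambda>_. c) (X i y)"
  using cdos unfolding cdo_def by blast
lemma X_sm: "i \<in> {1..n} \<Longrightarrow> f \<in> C \<Longrightarrow> X i (sm f y) = sm f (X i y) + sm (xs i f) y"
  using cdos unfolding cdo_def by blast
lemma X_zero: "i \<in> {1..n} \<Longrightarrow> X i 0 = 0"
  using X_add[of i 0 0] by simp
lemma X_minus: "i \<in> {1..n} \<Longrightarrow> X i (- y) = - X i y"
  using X_add[of i y "- y"] X_zero[of i] by (simp add: eq_neg_iff_add_eq_0 add.commute)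
lemma X_diff: "i \<in> {1..n} \<Longrightarrow> X i (y - z) = X i y - X i z"
  using X_add[of i y "- z"] X_minus[of i z] by simp
lemma X_sum: "i \<in> {1..n} \<Longrightarrow> X i (\<Sum>j\<in>J. v j) = (\<Sum>j\<in>J. X i (v j))"
  by (induction J rule: infinite_finite_induct) (simp_all add: X_zero X_add)

lemma xi_add: "i \<in> {1..n} \<Longrightarrow> \<xi> i (y + z) = (\<lambda>m. \<xi> i y m + \<xi> i z m)"
  using dual unfolding dual_section_def by blast
lemma xi_sm: "i \<in> {1..n} \<Longrightarrow> f \<in> C \<Longrightarrow> \<xi> i (sm f y) = (\<lambda>m. f m * \<xi> i y m)"
  using dual unfolding dual_section_def by blast
lemma xi_zero: "i \<in> {1..n} \<Longrightarrow> \<xi> i 0 = (\<lambda>_. 0)"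
proof -
  assume i: "i \<in> {1..n}"
  have "\<And>m. \<xi> i 0 m = \<xi> i 0 m + \<xi> i 0 m" using xi_add[OF i, of 0 0] by (metis add_0)
  then show ?thesis by auto
qed
lemma xi_minus: "i \<in> {1..n} \<Longrightarrow> \<xi> i (- y) = (\<lambda>m. - \<xi> i y m)"
proof -
  assume i: "i \<in> {1..n}"
  have "\<xi> i (y + - y) = (\<lambda>m. \<xi> i y m + \<xi> i (- y) m)" using xi_add[OF i] .
  then have "\<And>m. \<xi> i y m + \<xi> i (- y) m = 0" using xi_zero[OF i] by (metis add.right_inverse)
  then show ?thesis by (auto simp: eq_neg_iff_add_eq_0 add.commute)
qed
lemma xi_diff: "i \<in> {1..n} \<Longrightarrow> \<xi> i (y - z) = (\<lambda>m. \<xi> i y m - \<xi> i z m)"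
  using xi_add[of i y "- z"] xi_minus[of i z] by simp
lemma xi_sum: "i \<in> {1..n} \<Longrightarrow> \<xi> i (\<Sum>j\<in>J. v j) = (\<lambda>m. \<Sum>j\<in>J. \<xi> i (v j) m)"
  by (induction J rule: infinite_finite_induct) (simp_all add: xi_zero xi_add)
lemma xi_X: "i \<in> {1..n} \<Longrightarrow> k \<in> {1..n} \<Longrightarrow>
   \<xi> k (X i y) = (\<lambda>m. xs i (\<xi> k y) m - (\<Sum>l=1..n. a i l k m * \<xi> l y m))"
proof -
  assume i: "i \<in> {1..n}" and k: "k \<in> {1..n}"
  have "cdo_dual (xs i) (X i) (\<xi> k) y = (\<lambda>m. \<Sum>l=1..n. a i l k m * \<xi> l y m)"
    using hdual i k by simp
  then show ?thesis unfolding cdo_dual_def by (auto simp: fun_eq_iff algebra_simps)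
qed

end


context setting begin

abbreviation "N \<equiv> nablaA sm n \<xi> X"

lemma XN: assumes i: "i \<in> {1..n}"
  shows "X i (N y z) = (\<Sum>j=1..n. sm (\<xi> j y) (X i (X j z))) + (\<Sum>j=1..n. sm (xs i (\<xi> j y)) (X j z))"
proof -
  have "X i (N y z) = (\<Sum>j=1..n. X i (sm (\<xi> j y) (X j z)))" unfolding nablaA_def X_sum[OF i] ..
  also have "\<dots> = (\<Sum>j=1..n. sm (\<xi> j y) (X i (X j z)) + sm (xs i (\<xi> j y)) (X j z))"
    by (rule sum.cong[OF refl]) (rule X_sm[OF i xi_C])
  finally show ?thesis by (simp add: sum.distrib)
qed

lemma NN: "N x (N y z) = (\<Sum>i=1..n. \<Sum>j=1..n. sm (\<lambda>m. \<xi> i x m * \<xi> j y m) (X i (X j z)))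
   + (\<Sum>j=1..n. sm (\<lambda>m. \<Sum>i=1..n. \<xi> i x m * xs i (\<xi> j y) m) (X j z))"
proof -
  have "N x (N y z) = (\<Sum>i=1..n. sm (\<xi> i x) (X i (N y z)))" by (simp add: nablaA_def)
  also have "\<dots> = (\<Sum>i=1..n. (\<Sum>j=1..n. sm (\<lambda>m. \<xi> i x m * \<xi> j y m) (X i (X j z)))
      + (\<Sum>j=1..n. sm (\<lambda>m. \<xi> i x m * xs i (\<xi> j y) m) (X j z)))"
  proof (rule sum.cong[OF refl])
    fix i assume i: "i \<in> {1..n}"
    have "sm (\<xi> i x) (X i (N y z)) = (\<Sum>j=1..n. sm (\<xi> i x) (sm (\<xi> j y) (X i (X j z))))
       + (\<Sum>j=1..n. sm (\<xi> i x) (sm (xs i (\<xi> j y)) (X j z)))"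
      unfolding XN[OF i] sm_add_right[OF xi_C[OF i]] sm_sum_right[OF xi_C[OF i]] ..
    also have "\<dots> = (\<Sum>j=1..n. sm (\<lambda>m. \<xi> i x m * \<xi> j y m) (X i (X j z)))
      + (\<Sum>j=1..n. sm (\<lambda>m. \<xi> i x m * xs i (\<xi> j y) m) (X j z))"
      by (intro arg_cong2[where f="(+)"] sum.cong refl)
        (rule sm_mult[symmetric], (rule xi_C xs_C i | assumption)+)+
    finally show "sm (\<xi> i x) (X i (N y z)) = \<dots>" .
  qed
  also have "\<dots> = (\<Sum>i=1..n. \<Sum>j=1..n. sm (\<lambda>m. \<xi> i x m * \<xi> j y m) (X i (X j z)))
   + (\<Sum>j=1..n. \<Sum>i=1..n. sm (\<lambda>m. \<xi> i x m * xs i (\<xi> j y) m) (X j z))"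
    unfolding sum.distrib by (rule arg_cong2[where f="(+)"], rule refl, rule sum.swap)
  also have "(\<Sum>j=1..n. \<Sum>i=1..n. sm (\<lambda>m. \<xi> i x m * xs i (\<xi> j y) m) (X j z))
     = (\<Sum>j=1..n. sm (\<lambda>m. \<Sum>i=1..n. \<xi> i x m * xs i (\<xi> j y) m) (X j z))"
    by (rule sum.cong[OF refl], rule sym, rule sm_sum_left) (auto intro!: Cintro)
  finally show ?thesis .
qed

lemma Qdiff: "(\<Sum>i=1..n. \<Sum>j=1..n. sm (\<lambda>m. \<xi> i x m * \<xi> j y m) (X i (X j z)))
  - (\<Sum>i=1..n. \<Sum>j=1..n. sm (\<lambda>m. \<xi> i y m * \<xi> j x m) (X i (X j z)))
  = (\<Sum>k=1..n. sm (\<lambda>m. \<Sum>i=1..n. \<Sum>j=1..n. \<xi> i x m * \<xi> j y m * (a j i k m - a i j k m)) (X k z))"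
proof -
  have "(\<Sum>i=1..n. \<Sum>j=1..n. sm (\<lambda>m. \<xi> i y m * \<xi> j x m) (X i (X j z)))
     = (\<Sum>i=1..n. \<Sum>j=1..n. sm (\<lambda>m. \<xi> i x m * \<xi> j y m) (X j (X i z)))"
    by (subst sum.swap) (simp add: mult.commute)
  then have "(\<Sum>i=1..n. \<Sum>j=1..n. sm (\<lambda>m. \<xi> i x m * \<xi> j y m) (X i (X j z)))
  - (\<Sum>i=1..n. \<Sum>j=1..n. sm (\<lambda>m. \<xi> i y m * \<xi> j x m) (X i (X j z)))
   = (\<Sum>i=1..n. \<Sum>j=1..n. sm (\<lambda>m. \<xi> i x m * \<xi> j y m) (X i (X j z) - X j (X i z)))"
    by (simp add: sum_subtractf[symmetric] sm_diff_right xi_C C_mult)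
  also have "\<dots> = (\<Sum>i=1..n. \<Sum>j=1..n. \<Sum>k=1..n. sm (\<lambda>m. \<xi> i x m * \<xi> j y m * (a j i k m - a i j k m)) (X k z))"
  proof (intro sum.cong refl)
    fix i j assume i: "i \<in> {1..n}" and j: "j \<in> {1..n}"
    have "sm (\<lambda>m. \<xi> i x m * \<xi> j y m) (X i (X j z) - X j (X i z))
      = (\<Sum>k=1..n. sm (\<lambda>m. \<xi> i x m * \<xi> j y m) (sm (\<lambda>m. a j i k m - a i j k m) (X k z)))"
      using hcomm i j by (simp add: sm_sum_right xi_C C_mult)
    also have "\<dots> = (\<Sum>k=1..n. sm (\<lambda>m. \<xi> i x m * \<xi> j y m * (a j i k m - a i j k m)) (X k z))"
      by (intro sum.cong refl, rule sym, rule sm_mult[of "\<lambda>m. \<xi> i x m * \<xi> j y m" "\<lambda>m. a j i k m - a i j k m" for k, simplified])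
        (auto intro!: Cintro i j)
    finally show "sm (\<lambda>m. \<xi> i x m * \<xi> j y m) (X i (X j z) - X j (X i z)) = \<dots>" .
  qed
  also have "\<dots> = (\<Sum>k=1..n. \<Sum>i=1..n. \<Sum>j=1..n. sm (\<lambda>m. \<xi> i x m * \<xi> j y m * (a j i k m - a i j k m)) (X k z))"
    by (subst sum.swap, subst (2) sum.swap) simp
  also have "\<dots> = (\<Sum>k=1..n. sm (\<lambda>m. \<Sum>i=1..n. \<Sum>j=1..n. \<xi> i x m * \<xi> j y m * (a j i k m - a i j k m)) (X k z))"
  proof (intro sum.cong refl)
    fix k assume k: "k \<in> {1..n}"
    have "sm (\<lambda>m. \<Sum>i=1..n. \<Sum>j=1..n. \<xi> i x m * \<xi> j y m * (a j i k m - a i j k m)) (X k z)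
      = (\<Sum>i=1..n. sm (\<lambda>m. \<Sum>j=1..n. \<xi> i x m * \<xi> j y m * (a j i k m - a i j k m)) (X k z))"
      by (rule sm_sum_left) (auto intro!: Cintro k)
    also have "\<dots> = (\<Sum>i=1..n. \<Sum>j=1..n. sm (\<lambda>m. \<xi> i x m * \<xi> j y m * (a j i k m - a i j k m)) (X k z))"
      by (intro sum.cong refl sm_sum_left) (auto intro!: Cintro k)
    finally show "(\<Sum>i=1..n. \<Sum>j=1..n. sm (\<lambda>m. \<xi> i x m * \<xi> j y m * (a j i k m - a i j k m)) (X k z)) = 
       sm (\<lambda>m. \<Sum>i=1..n. \<Sum>j=1..n. \<xi> i x m * \<xi> j y m * (a j i k m - a i j k m)) (X k z)" by simp
  qed
  finally show ?thesis .
qed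

lemma xi_N: assumes k: "k \<in> {1..n}"
  shows "\<xi> k (N x y) = (\<lambda>m. \<Sum>i=1..n. \<xi> i x m * (xs i (\<xi> k y) m - (\<Sum>l=1..n. a i l k m * \<xi> l y m)))"
proof -
  have "\<xi> k (N x y) = (\<lambda>m. \<Sum>i=1..n. \<xi> k (sm (\<xi> i x) (X i y)) m)"
    unfolding nablaA_def xi_sum[OF k] ..
  also have "\<dots> = (\<lambda>m. \<Sum>i=1..n. \<xi> i x m * (xs i (\<xi> k y) m - (\<Sum>l=1..n. a i l k m * \<xi> l y m)))"
  proof (rule ext, rule sum.cong[OF refl])
    fix m i assume i: "i \<in> {1..n}"
    show "\<xi> k (sm (\<xi> i x) (X i y)) m = \<xi> i x m * (xs i (\<xi> k y) m - (\<Sum>l=1..n. a i l k m * \<xi> l y m))"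
      unfolding xi_sm[OF k xi_C[OF i]] xi_X[OF i k] ..
  qed
  finally show ?thesis .
qed

end


lemma coef_identity:
  fixes p q u v :: "nat \<Rightarrow> real" and A :: "nat \<Rightarrow> nat \<Rightarrow> real"
  shows "(\<Sum>i\<in>I. \<Sum>j\<in>I. p i * q j * (A j i - A i j)) + (\<Sum>i\<in>I. p i * u i) - (\<Sum>i\<in>I. q i * v i)
    - ((\<Sum>i\<in>I. p i * (u i - (\<Sum>l\<in>I. A i l * q l))) - (\<Sum>i\<in>I. q i * (v i - (\<Sum>l\<in>I. A i l * p l)))) = 0"
proof -
  have e1: "(\<Sum>i\<in>I. \<Sum>j\<in>I. p i * q j * A j i) = (\<Sum>i\<in>I. q i * (\<Sum>l\<in>I. A i l * p l))"
    by (subst sum.swap) (simp add: sum_distrib_left mult_ac)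
  have e2: "(\<Sum>i\<in>I. \<Sum>j\<in>I. p i * q j * A i j) = (\<Sum>i\<in>I. p i * (\<Sum>l\<in>I. A i l * q l))"
    by (simp add: sum_distrib_left mult_ac)
  have e3: "(\<Sum>i\<in>I. \<Sum>j\<in>I. p i * q j * (A j i - A i j)) = (\<Sum>i\<in>I. \<Sum>j\<in>I. p i * q j * A j i) - (\<Sum>i\<in>I. \<Sum>j\<in>I. p i * q j * A i j)"
    by (simp add: right_diff_distrib sum_subtractf)
  show ?thesis unfolding e3 e1 e2 by (simp add: right_diff_distrib sum_subtractf)
qed

context setting begin

theorem curv_zero: "curvature N (bracketA sm n \<xi> X) x y z = 0"
proof -
  define c1 where "c1 = (\<lambda>k m. \<Sum>i=1..n. \<Sum>j=1..n. \<xi> i x m * \<xi> j y m * (a j i k m - a i j k m))"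
  define L1 where "L1 = (\<lambda>k m. \<Sum>i=1..n. \<xi> i x m * xs i (\<xi> k y) m)"
  define L2 where "L2 = (\<lambda>k m. \<Sum>i=1..n. \<xi> i y m * xs i (\<xi> k x) m)"
  define c4 where "c4 = (\<lambda>k m. (\<Sum>i=1..n. \<xi> i x m * (xs i (\<xi> k y) m - (\<Sum>l=1..n. a i l k m * \<xi> l y m)))
     - (\<Sum>i=1..n. \<xi> i y m * (xs i (\<xi> k x) m - (\<Sum>l=1..n. a i l k m * \<xi> l x m))))"
  have C1: "c1 k \<in> C" "L1 k \<in> C" "L2 k \<in> C" "c4 k \<in> C" if k: "k \<in> {1..n}" for k
    unfolding c1_def L1_def L2_def c4_def by (auto intro!: Cintro k)
  have nb: "N (bracketA sm n \<xi> X x y) z = (\<Sum>k=1..n. sm (c4 k) (X k z))"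
  proof -
    have "N (bracketA sm n \<xi> X x y) z = (\<Sum>k=1..n. sm (\<xi> k (N x y - N y x)) (X k z))"
      unfolding bracketA_def nablaA_def ..
    also have "\<dots> = (\<Sum>k=1..n. sm (c4 k) (X k z))"
    proof (rule sum.cong[OF refl])
      fix k assume k: "k \<in> {1..n}"
      show "sm (\<xi> k (N x y - N y x)) (X k z) = sm (c4 k) (X k z)"
        unfolding xi_diff[OF k] xi_N[OF k] c4_def ..
    qed
    finally show ?thesis .
  qed
  have "curvature N (bracketA sm n \<xi> X) x y z
     = (\<Sum>k=1..n. sm (c1 k) (X k z)) + (\<Sum>k=1..n. sm (L1 k) (X k z)) - (\<Sum>k=1..n. sm (L2 k) (X k z))
       - (\<Sum>k=1..n. sm (c4 k) (X k z))"
    unfolding curvature_def NN[of x y z] NN[of y x z] nb Qdiff[symmetric] c1_def L1_def L2_def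
    by (simp add: algebra_simps)
  also have "\<dots> = (\<Sum>k=1..n. sm (\<lambda>m. c1 k m + L1 k m - L2 k m - c4 k m) (X k z))"
    unfolding sum_subtractf[symmetric] sum.distrib[symmetric]
  proof (rule sum.cong[OF refl])
    fix k assume k: "k \<in> {1..n}"
    show "sm (c1 k) (X k z) + sm (L1 k) (X k z) - sm (L2 k) (X k z) - sm (c4 k) (X k z) =
         sm (\<lambda>m. c1 k m + L1 k m - L2 k m - c4 k m) (X k z)"
      using C1[OF k]
      by (simp add: sm_diff_left sm_add_left C_add C_diff)
  qed
  also have "\<dots> = 0"
  proof (rule sum.neutral, rule ballI)
    fix k assume k: "k \<in> {1..n}"
    show "sm (\<lambda>m. c1 k m + L1 k m - L2 k m - c4 k m) (X k z) = 0"
      by (rule sm_zero_left') (simp add: fun_eq_iff c1_def L1_def L2_def c4_def coef_identity)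
  qed
  finally show ?thesis .
qed

end


context setting begin

abbreviation "B \<equiv> bracketA sm n \<xi> X"
abbreviation "anc \<equiv> anchorA n \<xi> xs"

lemma xs_add: "i \<in> {1..n} \<Longrightarrow> f \<in> C \<Longrightarrow> g \<in> C \<Longrightarrow> xs i (\<lambda>m. f m + g m) = (\<lambda>m. xs i f m + xs i g m)"
  using cdos unfolding cdo_def vector_field_def by blast
lemma xs_scale: "i \<in> {1..n} \<Longrightarrow> f \<in> C \<Longrightarrow> xs i (\<lambda>m. c * f m) = (\<lambda>m. c * xs i f m)"
  using cdos unfolding cdo_def vector_field_def by blast
lemma xs_mult: "i \<in> {1..n} \<Longrightarrow> f \<in> C \<Longrightarrow> g \<in> C \<Longrightarrow> xs i (\<lambda>m. f m * g m) = (\<lambda>m. f m * xs i g m + g m * xs i f m)"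
  using cdos unfolding cdo_def vector_field_def by blast

lemma anc_vf: "vector_field C (anc y)"
  unfolding vector_field_def
proof (intro conjI ballI allI)
  fix f assume "f \<in> C" then show "anc y f \<in> C" unfolding anchorA_def by (auto intro!: Cintro)
next
  fix f g assume f: "f \<in> C" and g: "g \<in> C"
  show "anc y (\<lambda>m. f m + g m) = (\<lambda>m. anc y f m + anc y g m)"
    unfolding anchorA_def
  proof (rule ext)
    fix m
    have "(\<Sum>i = 1..n. \<xi> i y m * xs i (\<lambda>m. f m + g m) m) = (\<Sum>i = 1..n. \<xi> i y m * xs i f m + \<xi> i y m * xs i g m)"
      by (rule sum.cong[OF refl]) (simp add: xs_add[OF _ f g] distrib_left)
    then show "(\<Sum>i = 1..n. \<xi> i y m * xs i (\<lambda>m. f m + g m) m) = (\<Sum>i = 1..n. \<xi> i y m * xs i f m) + (\<Sum>i = 1..n. \<xi> i y m * xs i g m)"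
      by (simp add: sum.distrib)
  qed
  show "anc y (\<lambda>m. f m * g m) = (\<lambda>m. f m * anc y g m + g m * anc y f m)"
    unfolding anchorA_def
  proof (rule ext)
    fix m
    have "(\<Sum>i = 1..n. \<xi> i y m * xs i (\<lambda>m. f m * g m) m) = (\<Sum>i = 1..n. f m * (\<xi> i y m * xs i g m) + g m * (\<xi> i y m * xs i f m))"
      by (rule sum.cong[OF refl]) (simp add: xs_mult[OF _ f g] algebra_simps)
    then show "(\<Sum>i = 1..n. \<xi> i y m * xs i (\<lambda>m. f m * g m) m) = f m * (\<Sum>i = 1..n. \<xi> i y m * xs i g m) + g m * (\<Sum>i = 1..n. \<xi> i y m * xs i f m)"
      by (simp add: sum.distrib sum_distrib_left)
  qed
next
  fix c f assume f: "f \<in> C"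
  show "anc y (\<lambda>m. c * f m) = (\<lambda>m. c * anc y f m)"
    unfolding anchorA_def
  proof (rule ext)
    fix m
    have "(\<Sum>i = 1..n. \<xi> i y m * xs i (\<lambda>m. c * f m) m) = (\<Sum>i = 1..n. c * (\<xi> i y m * xs i f m))"
      by (rule sum.cong[OF refl]) (simp add: xs_scale[OF _ f])
    then show "(\<Sum>i = 1..n. \<xi> i y m * xs i (\<lambda>m. c * f m) m) = c * (\<Sum>i = 1..n. \<xi> i y m * xs i f m)"
      by (simp add: sum_distrib_left)
  qed
qed

lemma anc_add: "anc (y + z) f = (\<lambda>m. anc y f m + anc z f m)"
  unfolding anchorA_def
proof (rule ext)
  fix m
  have "(\<Sum>i = 1..n. \<xi> i (y + z) m * xs i f m) = (\<Sum>i = 1..n. \<xi> i y m * xs i f m + \<xi> i z m * xs i f m)"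
  proof (rule sum.cong[OF refl])
    fix i assume i: "i \<in> {1..n}"
    show "\<xi> i (y + z) m * xs i f m = \<xi> i y m * xs i f m + \<xi> i z m * xs i f m"
      unfolding xi_add[OF i] by (simp add: distrib_right)
  qed
  then show "(\<Sum>i = 1..n. \<xi> i (y + z) m * xs i f m) = (\<Sum>i = 1..n. \<xi> i y m * xs i f m) + (\<Sum>i = 1..n. \<xi> i z m * xs i f m)"
    by (simp add: sum.distrib)
qed

lemma anc_sm: assumes g: "g \<in> C" shows "anc (sm g y) f = (\<lambda>m. g m * anc y f m)"
  unfolding anchorA_def
proof (rule ext)
  fix m
  have "(\<Sum>i = 1..n. \<xi> i (sm g y) m * xs i f m) = (\<Sum>i = 1..n. g m * (\<xi> i y m * xs i f m))"
  proof (rule sum.cong[OF refl])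
    fix i assume i: "i \<in> {1..n}"
    show "\<xi> i (sm g y) m * xs i f m = g m * (\<xi> i y m * xs i f m)"
      unfolding xi_sm[OF i g] by simp
  qed
  then show "(\<Sum>i = 1..n. \<xi> i (sm g y) m * xs i f m) = g m * (\<Sum>i = 1..n. \<xi> i y m * xs i f m)"
    by (simp add: sum_distrib_left)
qed

lemma N_add_right: "N x (y + z) = N x y + N x z"
proof -
  have "N x (y + z) = (\<Sum>i=1..n. sm (\<xi> i x) (X i y) + sm (\<xi> i x) (X i z))"
    unfolding nablaA_def
  proof (rule sum.cong[OF refl])
    fix i assume i: "i \<in> {1..n}"
    show "sm (\<xi> i x) (X i (y + z)) = sm (\<xi> i x) (X i y) + sm (\<xi> i x) (X i z)"
      unfolding X_add[OF i] sm_add_right[OF xi_C[OF i]] ..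
  qed
  then show ?thesis by (simp add: sum.distrib nablaA_def)
qed

lemma N_add_left: "N (x + y) z = N x z + N y z"
proof -
  have "N (x + y) z = (\<Sum>i=1..n. sm (\<xi> i x) (X i z) + sm (\<xi> i y) (X i z))"
    unfolding nablaA_def
  proof (rule sum.cong[OF refl])
    fix i assume i: "i \<in> {1..n}"
    show "sm (\<xi> i (x + y)) (X i z) = sm (\<xi> i x) (X i z) + sm (\<xi> i y) (X i z)"
      unfolding xi_add[OF i] by (rule sm_add_left) (rule xi_C[OF i])+
  qed
  then show ?thesis by (simp add: sum.distrib nablaA_def)
qed

lemma add_hom_diff:
  fixes h :: "'s \<Rightarrow> 's"
  assumes "\<And>u v. h (u + v) = h u + h v" shows "h (u - v) = h u - h v"
  by (metis assms add_diff_cancel diff_add_cancel eq_diff_eq)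

lemma N_diff_right: "N x (y - z) = N x y - N x z"
  by (rule add_hom_diff[where h="N x"]) (rule N_add_right)
lemma N_diff_left: "N (x - y) z = N x z - N y z"
  by (rule add_hom_diff[where h="\<lambda>x. N x z", simplified]) (rule N_add_left)

lemma N_sm_left: assumes f: "f \<in> C" shows "N (sm f y) x = sm f (N y x)"
proof -
  have "N (sm f y) x = (\<Sum>i=1..n. sm f (sm (\<xi> i y) (X i x)))"
    unfolding nablaA_def
  proof (rule sum.cong[OF refl])
    fix i assume i: "i \<in> {1..n}"
    show "sm (\<xi> i (sm f y)) (X i x) = sm f (sm (\<xi> i y) (X i x))"
      unfolding xi_sm[OF i f] by (rule sm_mult) (rule f xi_C[OF i])+
  qed
  then show ?thesis by (simp add: nablaA_def sm_sum_right[OF f])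
qed

lemma N_const_right: "N x (sm (\<lambda>_. c) y) = sm (\<lambda>_. c) (N x y)"
proof -
  have "N x (sm (\<lambda>_. c) y) = (\<Sum>i=1..n. sm (\<lambda>_. c) (sm (\<xi> i x) (X i y)))"
    unfolding nablaA_def
  proof (rule sum.cong[OF refl])
    fix i assume i: "i \<in> {1..n}"
    have "sm (\<xi> i x) (sm (\<lambda>_. c) (X i y)) = sm (\<lambda>m. \<xi> i x m * c) (X i y)"
      by (rule sm_mult[symmetric]) (rule C_const xi_C[OF i])+
    also have "\<dots> = sm (\<lambda>m. c * \<xi> i x m) (X i y)" by (simp add: mult.commute)
    also have "\<dots> = sm (\<lambda>_. c) (sm (\<xi> i x) (X i y))"
      by (rule sm_mult) (rule C_const xi_C[OF i])+
    finally show "sm (\<xi> i x) (X i (sm (\<lambda>_. c) y)) = sm (\<lambda>_. c) (sm (\<xi> i x) (X i y))"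
      unfolding X_const[OF i] .
  qed
  then show ?thesis by (simp add: nablaA_def sm_sum_right[OF C_const])
qed

lemma N_sm_right: assumes f: "f \<in> C" shows "N x (sm f y) = sm f (N x y) + sm (anc x f) y"
proof -
  have "N x (sm f y) = (\<Sum>i=1..n. sm f (sm (\<xi> i x) (X i y)) + sm (\<lambda>m. \<xi> i x m * xs i f m) y)"
    unfolding nablaA_def
  proof (rule sum.cong[OF refl])
    fix i assume i: "i \<in> {1..n}"
    have "sm (\<xi> i x) (sm f (X i y)) = sm (\<lambda>m. \<xi> i x m * f m) (X i y)"
      by (rule sm_mult[symmetric]) (rule f xi_C[OF i])+
    also have "\<dots> = sm (\<lambda>m. f m * \<xi> i x m) (X i y)" by (simp add: mult.commute)
    also have "\<dots> = sm f (sm (\<xi> i x) (X i y))"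
      by (rule sm_mult) (rule f xi_C[OF i])+
    finally have e: "sm (\<xi> i x) (sm f (X i y)) = sm f (sm (\<xi> i x) (X i y))" .
    have e2: "sm (\<xi> i x) (sm (xs i f) y) = sm (\<lambda>m. \<xi> i x m * xs i f m) y"
      by (rule sm_mult[symmetric]) (rule f xi_C[OF i] xs_C[OF i])+
    show "sm (\<xi> i x) (X i (sm f y)) = sm f (sm (\<xi> i x) (X i y)) + sm (\<lambda>m. \<xi> i x m * xs i f m) y"
      unfolding X_sm[OF i f] sm_add_right[OF xi_C[OF i]] e e2 ..
  qed
  also have "\<dots> = sm f (N x y) + (\<Sum>i=1..n. sm (\<lambda>m. \<xi> i x m * xs i f m) y)"
    by (simp add: sum.distrib nablaA_def sm_sum_right[OF f])
  also have "(\<Sum>i=1..n. sm (\<lambda>m. \<xi> i x m * xs i f m) y) = sm (anc x f) y"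
    unfolding anchorA_def by (rule sm_sum_left[symmetric]) (auto intro!: Cintro f)
  finally show ?thesis .
qed

theorem lie: "lie_algebroid C sm B anc"
  unfolding lie_algebroid_def
proof (intro conjI allI ballI)
  show "vector_field C (anc y)" for y by (rule anc_vf)
  show "anc (y + z) f = (\<lambda>m. anc y f m + anc z f m)" for y z f by (rule anc_add)
  show "anc (sm g y) f = (\<lambda>m. g m * anc y f m)" if "g \<in> C" for g y f by (rule anc_sm[OF that])
  show "B x (y + z) = B x y + B x z" for x y z
    unfolding bracketA_def N_add_right N_add_left by (simp add: algebra_simps)
  show "B (x + y) z = B x z + B y z" for x y z
    unfolding bracketA_def N_add_right N_add_left by (simp add: algebra_simps)
  show "B x (sm (\<lambda>_. c) y) = sm (\<lambda>_. c) (B x y)" for c x y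
    unfolding bracketA_def N_const_right N_sm_left[OF C_const] sm_diff_right[OF C_const] ..
  show "B (sm (\<lambda>_. c) x) y = sm (\<lambda>_. c) (B x y)" for c x y
    unfolding bracketA_def N_const_right N_sm_left[OF C_const] sm_diff_right[OF C_const] ..
  show "B x y = - B y x" for x y unfolding bracketA_def by simp
  show "B x (sm f y) = sm f (B x y) + sm (anc x f) y" if f: "f \<in> C" for x y f
    unfolding bracketA_def N_sm_right[OF f] N_sm_left[OF f] sm_diff_right[OF f] by (simp add: algebra_simps)
  show "B x (B y z) + B y (B z x) + B z (B x y) = 0" for x y z
  proof -
    have "B x (B y z) + B y (B z x) + B z (B x y) =
       curvature N B x y z + curvature N B y z x + curvature N B z x y"
      unfolding bracketA_def curvature_def N_diff_right N_diff_left by (simp add: algebra_simps)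
    then show ?thesis by (simp add: curv_zero)
  qed
qed

end

theorem proposition2p11:
  fixes C :: "('m \<Rightarrow> real) set"
    and sm :: "('m \<Rightarrow> real) \<Rightarrow> 's::ab_group_add \<Rightarrow> 's"
    and n :: nat
    and \<xi> :: "nat \<Rightarrow> 's \<Rightarrow> 'm \<Rightarrow> real"
    and X :: "nat \<Rightarrow> 's \<Rightarrow> 's"
    and xs :: "nat \<Rightarrow> ('m \<Rightarrow> real) \<Rightarrow> ('m \<Rightarrow> real)"
    and a :: "nat \<Rightarrow> nat \<Rightarrow> nat \<Rightarrow> 'm \<Rightarrow> real"
  assumes alg: "smooth_algebra C"
    and modl: "section_module C sm"
    and dual: "\<forall>i\<in>{1..n}. dual_section C sm (\<xi> i)"
    and indep: "lin_indep_dual C n \<xi>"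
    and cdos: "\<forall>i\<in>{1..n}. cdo C sm (X i) (xs i)"
    and a_smooth: "\<forall>i\<in>{1..n}. \<forall>j\<in>{1..n}. \<forall>k\<in>{1..n}. a i k j \<in> C"
    and hdual: "\<forall>i\<in>{1..n}. \<forall>j\<in>{1..n}.
        cdo_dual (xs i) (X i) (\<xi> j) = (\<lambda>y m. \<Sum>k=1..n. a i k j m * \<xi> k y m)"
    and hcomm: "\<forall>i\<in>{1..n}. \<forall>j\<in>{1..n}. \<forall>z.
        X i (X j z) - X j (X i z) = (\<Sum>k=1..n. sm (\<lambda>m. a j i k m - a i j k m) (X k z))"
  shows "(\<forall>x y z. curvature (nablaA sm n \<xi> X) (bracketA sm n \<xi> X) x y z = 0)
         \<and> lie_algebroid C sm (bracketA sm n \<xi> X) (anchorA n \<xi> xs)"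
proof -
  interpret setting C sm n \<xi> X xs a
    using alg modl dual cdos a_smooth hdual hcomm by unfold_locales
  show ?thesis using curv_zero lie by blast
qed

end
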